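(* Let $\Omega=\{1,\dots,m\}^{\mathbb{N}}$ with shift $\sigma$, let $\mathcal{M}$ be the set of Borel probabilities on $\Omega$ with the Monge–Kantorovich metric $d_{MK}$, and let $\mathfrak{T}:\mathcal{M}\to\mathcal{M}$ be the push-forward map $\mathfrak{T}(\mu)(E)=\mu(\sigma^{-1}(E))$. Given $\epsilon>0$, a probability $\tilde\mu_2\in\mathcal{M}$, and a $\sigma$-invariant probability $\tilde\mu_1\in\mathcal{M}$, there exist $\rho_1,\mu_2\in\mathcal{M}$ and an integer $N>0$ such that $d_{MK}(\rho_1,\tilde\mu_1)<\epsilon$, $d_{MK}(\mu_2,\tilde\mu_2)<\epsilon$, and $\mathfrak{T}^N(\rho_1)=\mu_2$.
   Context: $\Omega$ carries the metric $d_\Omega(\alpha,\beta)=0$ if $\alpha=\beta$ and $d_\Omega(\alpha,\beta)=2^{-k}$ where $k=\min\{i:\alpha_i\neq\beta_i\}$ otherwise. The Monge–Kantorovich metric on $\mathcal{M}$ is $d_{MK}(\mu,\nu)=\sup\{\int f\,d\mu-\int f\,d\nu : f:\Omega\to\mathbb{R}\ \text{1-Lipschitz}\}$. $\sigma(x_1,x_2,\dots)=(x_2,x_3,\dots)$. *)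

theory Defs
  imports "HOL-Probability.Probability"
begin

text \<open>Coordinate x i (i = 0,1,2,...) corresponds
  to the paper's x_(i+1). Omega is equipped with the product sigma algebra of the discrete
  spaces {1..m}, which is the Borel sigma algebra of the metric d_Omega.\<close>

definition Omega :: "nat \<Rightarrow> (nat \<Rightarrow> nat) set" where
  "Omega m = {x. \<forall>i. x i \<in> {1..m}}"

definition OmegaM :: "nat \<Rightarrow> (nat \<Rightarrow> nat) measure" where
  "OmegaM m = PiM UNIV (\<lambda>_. count_space {1..m})"

definition d_Omega :: "(nat \<Rightarrow> nat) \<Rightarrow> (nat \<Rightarrow> nat) \<Rightarrow> real" where
  "d_Omega a b = (if a = b then 0 else (1/2) ^ (Suc (LEAST i. a i \<noteq> b i)))"

definition shift :: "(nat \<Rightarrow> nat) \<Rightarrow> (nat \<Rightarrow> nat)" where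
  "shift x = (\<lambda>i. x (Suc i))"

definition probs :: "nat \<Rightarrow> (nat \<Rightarrow> nat) measure set" where
  "probs m = {\<mu>. prob_space \<mu> \<and> sets \<mu> = sets (OmegaM m)}"

definition lip1 :: "nat \<Rightarrow> ((nat \<Rightarrow> nat) \<Rightarrow> real) \<Rightarrow> bool" where
  "lip1 m f \<longleftrightarrow> (\<forall>x\<in>Omega m. \<forall>y\<in>Omega m. \<bar>f x - f y\<bar> \<le> d_Omega x y)"

definition d_MK :: "nat \<Rightarrow> (nat \<Rightarrow> nat) measure \<Rightarrow> (nat \<Rightarrow> nat) measure \<Rightarrow> real" where
  "d_MK m \<mu> \<nu> = Sup {(\<integral>x. f x \<partial>\<mu>) - (\<integral>x. f x \<partial>\<nu>) | f. lip1 m f}"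

definition pushT :: "nat \<Rightarrow> (nat \<Rightarrow> nat) measure \<Rightarrow> (nat \<Rightarrow> nat) measure" where
  "pushT m \<mu> = distr \<mu> (OmegaM m) shift"

definition shift_invariant :: "nat \<Rightarrow> (nat \<Rightarrow> nat) measure \<Rightarrow> bool" where
  "shift_invariant m \<mu> \<longleftrightarrow> pushT m \<mu> = \<mu>"

end

theory Submission imports Defs begin

lemma space_OmegaM: "space (OmegaM m) = Omega m"
  by (auto simp: OmegaM_def space_PiM PiE_UNIV_domain Omega_def)

lemma comp_meas: "(\<lambda>x. x i) \<in> OmegaM m \<rightarrow>\<^sub>M count_space {1..m}"
  unfolding OmegaM_def by (rule measurable_component_singleton) simp

lemma into_OmegaM:
  assumes "\<And>i. (\<lambda>x. f x i) \<in> N \<rightarrow>\<^sub>M count_space {1..m}"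
    and "\<And>x. x \<in> space N \<Longrightarrow> f x \<in> Omega m"
  shows "f \<in> N \<rightarrow>\<^sub>M OmegaM m"
proof -
  have "(\<lambda>x i. f x i) \<in> N \<rightarrow>\<^sub>M Pi\<^sub>M UNIV (\<lambda>_. count_space {1..m})"
    by (rule measurable_PiM_single') (use assms in \<open>auto simp: Omega_def PiE_UNIV_domain\<close>)
  then show ?thesis unfolding OmegaM_def by simp
qed

lemma shift_meas: "shift \<in> OmegaM m \<rightarrow>\<^sub>M OmegaM m"
proof (rule into_OmegaM)
  fix i show "(\<lambda>x. shift x i) \<in> OmegaM m \<rightarrow>\<^sub>M count_space {1..m}"
    unfolding shift_def by (rule comp_meas)
qed (auto simp: shift_def space_OmegaM Omega_def)

lemma splice_meas: "(\<lambda>p. (\<lambda>i. if i < N then fst p i else snd p (i - N))) \<in> OmegaM m \<Otimes>\<^sub>M OmegaM m \<rightarrow>\<^sub>M OmegaM m"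
proof (rule into_OmegaM)
  fix i
  show "(\<lambda>p. if i < N then fst p i else snd p (i - N)) \<in> OmegaM m \<Otimes>\<^sub>M OmegaM m \<rightarrow>\<^sub>M count_space {1..m}"
  proof (cases "i < N")
    case True
    then show ?thesis using measurable_compose[OF measurable_fst comp_meas] by simp
  next
    case False
    then show ?thesis using measurable_compose[OF measurable_snd comp_meas] by simp
  qed
qed (auto simp: space_pair_measure space_OmegaM Omega_def)

lemma map_eq_iff: "(map x [0..<n] = l) \<longleftrightarrow> (length l = n \<and> (\<forall>i\<in>{..<n}. x i = l ! i))"
proof
  assume "map x [0..<n] = l" then show "length l = n \<and> (\<forall>i\<in>{..<n}. x i = l ! i)" by auto
next
  assume a: "length l = n \<and> (\<forall>i\<in>{..<n}. x i = l ! i)"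
  show "map x [0..<n] = l"
    by (rule nth_equalityI) (use a in auto)
qed

lemma pred_comp: "Measurable.pred (OmegaM m) (\<lambda>x. x i = (c::nat))"
proof -
  have "(\<lambda>x. x i) -` ({c} \<inter> {1..m}) \<inter> space (OmegaM m) \<in> sets (OmegaM m)"
    by (rule measurable_sets[OF comp_meas]) auto
  moreover have "(\<lambda>x. x i) -` ({c} \<inter> {1..m}) \<inter> space (OmegaM m) = {x\<in>space (OmegaM m). x i = c}"
    by (auto simp: space_OmegaM Omega_def)
  ultimately show ?thesis unfolding pred_def by simp
qed

lemma map_meas: "(\<lambda>x. map x [0..<n]) \<in> OmegaM m \<rightarrow>\<^sub>M count_space UNIV"
proof (subst measurable_count_space_eq2_countable, safe)
  fix l :: "nat list"
  have "Measurable.pred (OmegaM m) (\<lambda>x. \<forall>i\<in>{..<n}. x i = l ! i)"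
    by (rule pred_intros_finite(3)) (auto intro: pred_comp)
  then have A: "{x\<in>space (OmegaM m). \<forall>i\<in>{..<n}. x i = l ! i} \<in> sets (OmegaM m)"
    unfolding pred_def .
  show "(\<lambda>x. map x [0..<n]) -` {l} \<inter> space (OmegaM m) \<in> sets (OmegaM m)"
  proof (cases "length l = n")
    case True
    have "(\<lambda>x. map x [0..<n]) -` {l} \<inter> space (OmegaM m) = {x\<in>space (OmegaM m). \<forall>i\<in>{..<n}. x i = l ! i}"
      using True by (auto simp only: map_eq_iff vimage_def Int_def mem_Collect_eq singleton_iff)
    then show ?thesis using A by simp
  next
    case False
    then have "(\<lambda>x. map x [0..<n]) -` {l} \<inter> space (OmegaM m) = {}"
      by (auto simp only: map_eq_iff vimage_def Int_def mem_Collect_eq singleton_iff)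
    then show ?thesis by simp
  qed
qed auto

lemma distr_pair_snd':
  assumes "prob_space N" "prob_space M"
  shows "distr (N \<Otimes>\<^sub>M M) M snd = M"
proof (intro measure_eqI)
  interpret N: prob_space N by fact
  interpret M: prob_space M by fact
  fix A assume A: "A \<in> sets (distr (N \<Otimes>\<^sub>M M) M snd)"
  from A have "emeasure (distr (N \<Otimes>\<^sub>M M) M snd) A = emeasure (N \<Otimes>\<^sub>M M) (space N \<times> A)"
    by (auto simp add: emeasure_distr space_pair_measure dest: sets.sets_into_space intro!: arg_cong2[where f=emeasure])
  with A show "emeasure (distr (N \<Otimes>\<^sub>M M) M snd) A = emeasure M A"
    by (simp add: M.emeasure_pair_measure_Times N.emeasure_space_1)
qed simp

lemma d_agree:
  assumes "\<And>i. i < n \<Longrightarrow> a i = b i"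
  shows "d_Omega a b \<le> (1/2) ^ n"
proof (cases "a = b")
  case True then show ?thesis by (simp add: d_Omega_def)
next
  case False
  then have ex: "\<exists>i. a i \<noteq> b i" by auto
  define k where "k = (LEAST i. a i \<noteq> b i)"
  have "a k \<noteq> b k" unfolding k_def by (rule LeastI_ex[OF ex])
  then have "n \<le> k" using assms by (meson not_le)
  then have "(1/2::real) ^ Suc k \<le> (1/2) ^ n"
    by (intro power_decreasing) auto
  then show ?thesis using False by (simp add: d_Omega_def k_def)
qed

lemma d_nonneg: "0 \<le> d_Omega a b"
  by (simp add: d_Omega_def)

lemma d_le: "d_Omega a b \<le> 1/2"
proof -
  have "(1/2::real) ^ Suc k \<le> 1/2" for k
  proof -
    have "(1/2::real) ^ k \<le> 1" by (rule power_le_one) auto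
    then show ?thesis by simp
  qed
  then show ?thesis by (simp add: d_Omega_def)
qed

lemma lip_meas:
  assumes m: "1 \<le> m" and f: "lip1 m f"
  shows "f \<in> borel_measurable (OmegaM m)"
proof (rule borel_measurable_LIMSEQ_real)
  define t where "t n x = (\<lambda>i. if i < n then x i else (1::nat))" for n and x :: "nat \<Rightarrow> nat"
  show "(\<lambda>x. f (t n x)) \<in> borel_measurable (OmegaM m)" for n
  proof -
    have "(\<lambda>x. (\<lambda>l. f (\<lambda>i. if i < n then l ! i else 1)) (map x [0..<n])) \<in> borel_measurable (OmegaM m)"
      by (rule measurable_compose[OF map_meas]) simp
    moreover have "(\<lambda>x. (\<lambda>l. f (\<lambda>i. if i < n then l ! i else 1)) (map x [0..<n])) = (\<lambda>x. f (t n x))"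
      by (auto simp: t_def intro!: ext arg_cong[where f=f])
    ultimately show ?thesis by simp
  qed
  fix x assume x: "x \<in> space (OmegaM m)"
  then have xO: "x \<in> Omega m" by (simp add: space_OmegaM)
  have tO: "t n x \<in> Omega m" for n using xO m by (auto simp: Omega_def t_def)
  have bd: "norm (f (t n x) - f x) \<le> (1/2) ^ n" for n
  proof -
    have "\<bar>f (t n x) - f x\<bar> \<le> d_Omega (t n x) x" using f tO xO by (auto simp: lip1_def)
    also have "\<dots> \<le> (1/2) ^ n" by (rule d_agree) (simp add: t_def)
    finally show ?thesis by simp
  qed
  have "(\<lambda>n. f (t n x) - f x) \<longlonglongrightarrow> 0"
    by (rule Lim_null_comparison[OF always_eventually[OF allI[OF bd]]]) (simp add: LIMSEQ_power_zero)
  then have "(\<lambda>n. (f (t n x) - f x) + f x) \<longlonglongrightarrow> 0 + f x"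
    by (intro tendsto_add tendsto_const)
  then show "(\<lambda>n. f (t n x)) \<longlonglongrightarrow> f x" by simp
qed

lemma funpow_shift: "(shift ^^ k) x = (\<lambda>i. x (i + k))"
  by (induction k arbitrary: x) (auto simp: shift_def)

lemma funpow_shift_meas: "(shift ^^ k) \<in> OmegaM m \<rightarrow>\<^sub>M OmegaM m"
proof (induction k)
  case (Suc k)
  have "shift \<circ> (shift ^^ k) \<in> OmegaM m \<rightarrow>\<^sub>M OmegaM m"
    by (rule measurable_comp[OF Suc shift_meas])
  then show ?case by (simp add: comp_def)
qed simp

lemma pushT_iter:
  assumes "sets \<mu> = sets (OmegaM m)"
  shows "(pushT m ^^ k) \<mu> = distr \<mu> (OmegaM m) (shift ^^ k)"
proof (induction k)
  case 0
  have "distr \<mu> (OmegaM m) (\<lambda>x. x) = distr \<mu> \<mu> (\<lambda>x. x)"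
    by (rule distr_cong) (use assms in auto)
  then show ?case by (simp add: id_def)
next
  case (Suc k)
  have sm: "(shift ^^ k) \<in> \<mu> \<rightarrow>\<^sub>M OmegaM m"
    using funpow_shift_meas measurable_cong_sets[OF assms refl] by blast
  have "(pushT m ^^ Suc k) \<mu> = pushT m ((pushT m ^^ k) \<mu>)" by simp
  also have "\<dots> = distr (distr \<mu> (OmegaM m) (shift ^^ k)) (OmegaM m) shift"
    by (simp only: Suc.IH pushT_def)
  also have "\<dots> = distr \<mu> (OmegaM m) (shift \<circ> (shift ^^ k))"
    by (rule distr_distr[OF shift_meas sm])
  finally show ?case by (simp add: comp_def)
qed

theorem theorem2p8:
  fixes m :: nat and \<epsilon> :: real and mu1' mu2' :: "(nat \<Rightarrow> nat) measure"
  assumes "\<epsilon> > 0"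
    and "mu2' \<in> probs m"
    and "mu1' \<in> probs m" and "shift_invariant m mu1'"
  shows "\<exists>rho1 \<in> probs m. \<exists>mu2 \<in> probs m. \<exists>N::nat. N > 0 \<and>
           d_MK m rho1 mu1' < \<epsilon> \<and> d_MK m mu2 mu2' < \<epsilon> \<and> (pushT m ^^ N) rho1 = mu2"
proof -
  let ?M = "OmegaM m"
  have p1: "prob_space mu1'" and s1: "sets mu1' = sets ?M"
    using assms(3) by (auto simp: probs_def)
  have p2: "prob_space mu2'" and s2: "sets mu2' = sets ?M"
    using assms(2) by (auto simp: probs_def)
  have sp1: "space mu1' = Omega m" using sets_eq_imp_space_eq[OF s1] by (simp add: space_OmegaM)
  have sp2: "space mu2' = Omega m" using sets_eq_imp_space_eq[OF s2] by (simp add: space_OmegaM)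
  have m1: "1 \<le> m"
  proof (rule ccontr)
    assume "\<not> 1 \<le> m"
    then have "Omega m = {}" by (auto simp: Omega_def)
    then show False using prob_space.not_empty[OF p2] sp2 by simp
  qed
  obtain n where n: "(1/2::real) ^ n < \<epsilon>"
    using real_arch_pow_inv[OF assms(1), of "1/2"] by auto
  define N where "N = Suc n"
  have N: "(1/2::real) ^ N < \<epsilon>"
    using n assms(1) unfolding N_def by simp
  define P where "P = mu1' \<Otimes>\<^sub>M mu2'"
  define sp where "sp = (\<lambda>p::(nat \<Rightarrow> nat) \<times> (nat \<Rightarrow> nat). (\<lambda>i. if i < N then fst p i else snd p (i - N)))"
  have sP: "sets P = sets (?M \<Otimes>\<^sub>M ?M)"
    unfolding P_def by (rule sets_pair_measure_cong[OF s1 s2])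
  have spP: "space P = Omega m \<times> Omega m"
    by (simp add: P_def space_pair_measure sp1 sp2)
  have spm: "sp \<in> P \<rightarrow>\<^sub>M ?M"
    using splice_meas measurable_cong_sets[OF sP refl] unfolding sp_def by blast
  have pP: "prob_space P"
  proof (rule prob_spaceI)
    interpret A: prob_space mu1' by (rule p1)
    interpret B: prob_space mu2' by (rule p2)
    have "emeasure P (space mu1' \<times> space mu2') = emeasure mu1' (space mu1') * emeasure mu2' (space mu2')"
      unfolding P_def by (rule B.emeasure_pair_measure_Times) auto
    then show "emeasure P (space P) = 1"
      by (simp add: P_def space_pair_measure A.emeasure_space_1 B.emeasure_space_1)
  qed
  interpret PP: prob_space P by (rule pP)
  define rho1 where "rho1 = distr P ?M sp"
  have rho_in: "rho1 \<in> probs m"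
    unfolding probs_def rho1_def using PP.prob_space_distr[OF spm] by simp
  have push: "(pushT m ^^ N) rho1 = mu2'"
  proof -
    have "(pushT m ^^ N) rho1 = distr rho1 ?M (shift ^^ N)"
      by (rule pushT_iter) (simp add: rho1_def)
    also have "\<dots> = distr P ?M ((shift ^^ N) \<circ> sp)"
      unfolding rho1_def by (rule distr_distr[OF funpow_shift_meas spm])
    also have "\<dots> = distr P mu2' snd"
    proof (rule distr_cong)
      show "sets ?M = sets mu2'" using s2 by simp
      fix p :: "(nat \<Rightarrow> nat) \<times> (nat \<Rightarrow> nat)"
      show "((shift ^^ N) \<circ> sp) p = snd p" by (simp add: funpow_shift sp_def)
    qed simp
    also have "\<dots> = mu2'"
      unfolding P_def by (rule distr_pair_snd'[OF p1 p2])
    finally show ?thesis .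
  qed
  have lip0: "lip1 m (\<lambda>_. 0)" by (simp add: lip1_def d_nonneg)
  have d2: "d_MK m mu2' mu2' = 0"
  proof -
    have "{(\<integral>x. f x \<partial>mu2') - (\<integral>x. f x \<partial>mu2') | f. lip1 m f} = {0}"
      using lip0 by auto
    then show ?thesis by (simp add: d_MK_def)
  qed
  have fst1: "distr P mu1' fst = mu1'"
    unfolding P_def by (rule prob_space.distr_pair_fst[OF p2])
  have key: "(\<integral>x. f x \<partial>rho1) - (\<integral>x. f x \<partial>mu1') \<le> (1/2) ^ N" if f: "lip1 m f" for f
  proof -
    have fm: "f \<in> borel_measurable ?M" by (rule lip_meas[OF m1 f])
    have fm1: "f \<in> borel_measurable mu1'" using fm measurable_cong_sets[OF s1 refl] by blast
    have fstm: "fst \<in> P \<rightarrow>\<^sub>M mu1'" unfolding P_def by (rule measurable_fst)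
    have e1: "(\<integral>x. f x \<partial>rho1) = (\<integral>p. f (sp p) \<partial>P)"
      unfolding rho1_def by (rule integral_distr[OF spm fm])
    have e2: "(\<integral>x. f x \<partial>mu1') = (\<integral>p. f (fst p) \<partial>P)"
      using integral_distr[OF fstm fm1] fst1 by simp
    define x0 where "x0 = (\<lambda>i::nat. 1::nat)"
    have x0O: "x0 \<in> Omega m" using m1 by (simp add: x0_def Omega_def)
    have fb: "\<bar>f x\<bar> \<le> \<bar>f x0\<bar> + 1/2" if "x \<in> Omega m" for x
    proof -
      have "\<bar>f x - f x0\<bar> \<le> d_Omega x x0" using f that x0O by (auto simp: lip1_def)
      then show ?thesis using d_le[of x x0] by simp
    qed
    have spO: "sp p \<in> Omega m" if "p \<in> space P" for p
      using that by (auto simp: spP sp_def Omega_def)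
    have i1: "integrable P (\<lambda>p. f (sp p))"
      by (rule PP.integrable_const_bound[where B="\<bar>f x0\<bar> + 1/2"])
         (auto intro!: AE_I2 fb spO measurable_compose[OF spm fm])
    have i2: "integrable P (\<lambda>p. f (fst p))"
      by (rule PP.integrable_const_bound[where B="\<bar>f x0\<bar> + 1/2"])
         (auto intro!: AE_I2 fb measurable_compose[OF fstm fm1] simp: spP)
    have "(\<integral>p. f (sp p) \<partial>P) - (\<integral>p. f (fst p) \<partial>P) = (\<integral>p. f (sp p) - f (fst p) \<partial>P)"
      by (rule Bochner_Integration.integral_diff[OF i1 i2, symmetric])
    also have "\<dots> \<le> (\<integral>p. (1/2) ^ N \<partial>P)"
    proof (rule integral_mono)
      show "integrable P (\<lambda>p. f (sp p) - f (fst p))" using i1 i2 by simp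
      show "integrable P (\<lambda>p. (1/2::real) ^ N)" by simp
      fix p assume p: "p \<in> space P"
      have "\<bar>f (sp p) - f (fst p)\<bar> \<le> d_Omega (sp p) (fst p)"
        using f spO[OF p] p by (auto simp: lip1_def spP)
      also have "\<dots> \<le> (1/2) ^ N" by (rule d_agree) (simp add: sp_def)
      finally show "f (sp p) - f (fst p) \<le> (1/2) ^ N" by simp
    qed
    also have "\<dots> = (1/2) ^ N" by (simp add: PP.prob_space)
    finally show ?thesis using e1 e2 by simp
  qed
  have d1: "d_MK m rho1 mu1' \<le> (1/2) ^ N"
    unfolding d_MK_def
  proof (rule cSup_least)
    show "{(\<integral>x. f x \<partial>rho1) - (\<integral>x. f x \<partial>mu1') | f. lip1 m f} \<noteq> {}"
      using lip0 by blast
    fix y assume "y \<in> {(\<integral>x. f x \<partial>rho1) - (\<integral>x. f x \<partial>mu1') | f. lip1 m f}"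
    then obtain f where "lip1 m f" and "y = (\<integral>x. f x \<partial>rho1) - (\<integral>x. f x \<partial>mu1')"
      by blast
    then show "y \<le> (1/2) ^ N" using key by simp
  qed
  have "N > 0" by (simp add: N_def)
  moreover have "d_MK m rho1 mu1' < \<epsilon>" using d1 N by linarith
  moreover have "d_MK m mu2' mu2' < \<epsilon>" using d2 assms(1) by simp
  ultimately show ?thesis using rho_in assms(2) push by blast
qed

end
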